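(* Let $n,M\ge1$ be integers, $\mathcal X=\{x^{(1)},\dots,x^{(L)}\}\subset\mathbb C$ a set of $L$ channel input symbols, $\sigma^2>0$, $g:\mathbb C\to[0,+\infty]$ measurable, $\epsilon>0$, $B\in\mathbb R$, $\delta<1$. Let $\mathscr C$ be a homogeneous $(n,M,\epsilon,B,\delta)$-code (as defined in the context) with information rate $R=\frac{\log_2M}{n}$; let $p_\ell=\int_{\mathcal E_\ell}f_{Y|X}(y|x^{(\ell)})dy$, assume $\sum_jp_j>0$, and let $Q(x^{(\ell)})=p_\ell/\sum_{j=1}^Lp_j$. Then: (i) $R\le H_2(P_{\mathscr C})+\frac1{n^2}\Big(\frac1{12}-\sum_{\ell=1}^L\frac1{12P_{\mathscr C}(x^{(\ell)})+1}\Big)+\frac1n\Big(\log_2\sqrt{2\pi}-\sum_{\ell=1}^L\log_2\sqrt{2\pi P_{\mathscr C}(x^{(\ell)})}\Big)-\frac{\log_2 n}{n}\cdot\frac{L-1}{2}$; (ii) $B\le\frac1{1-\delta}\sum_{\ell=1}^LP_{\mathscr C}(x^{(\ell)})\,\mathbb E\big[g(x^{(\ell)}+W)\big]$, where $W$ is a complex circularly symmetric Gaussian random variable whose real and imaginary parts have zero means and variances $\sigma^2/2$; (iii) $\epsilon\ge1-\exp\Big(-nH(P_{\mathscr C})-nD(P_{\mathscr C}\|Q)+n\ln\sum_{j=1}^Lp_j\Big)$.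
   Context: $H_2(P)=-\sum_xP(x)\log_2P(x)$ (with $\log_2 0=-\infty$); in (iii) $H(P)=-\sum_xP(x)\ln P(x)$ and $D(P\|Q)=\sum_xP(x)\ln\frac{P(x)}{Q(x)}$. Channel: outputs $\boldsymbol Y=\boldsymbol x+\boldsymbol N_1$, $\boldsymbol Z=\boldsymbol x+\boldsymbol N_2$, all noise components i.i.d. complex circularly symmetric Gaussian with real and imaginary parts of zero mean and variance $\sigma^2/2$; $f_{Y|X}(y|x)=\frac1{\pi\sigma^2}\exp(-|y-x|^2/\sigma^2)$, $f_{\boldsymbol Y|\boldsymbol X}(\boldsymbol y|\boldsymbol x)=\prod_tf_{Y|X}(y_t|x_t)$ (same for $\boldsymbol Z$). An $(n,M)$-code is $\mathscr C=\{(\boldsymbol u(i),\mathcal D_i)\}_{i=1}^M$ with $\boldsymbol u(i)\in\mathcal X^n$, $|u_t(i)|\le P$ for a fixed $P>0$, pairwise disjoint measurable $\mathcal D_i\subseteq\mathbb C^n$, $M\le2^{n\lfloor\log_2L\rfloor}$; decoding sets are of product form $\mathcal D_i=\mathcal D_{i,1}\times\cdots\times\mathcal D_{i,n}$, $\mathcal D_{i,t}\subseteq\mathbb C$ measurable. $\gamma_i(\mathscr C)=1-\int_{\mathcal D_i}f_{\boldsymbol Y|\boldsymbol X}(\boldsymbol y|\boldsymbol u(i))d\boldsymbol y$, $\gamma=\frac1M\sum_i\gamma_i$; $(n,M,\epsilon)$-code: $\gamma<\epsilon$. With $\bar g(\boldsymbol z)=\frac1n\sum_tg(z_t)$, $\theta_i=\Pr[\bar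 g(\boldsymbol Z)<B\mid\boldsymbol X=\boldsymbol u(i)]$, $\theta=\frac1M\sum_i\theta_i$; $(n,M,\epsilon,B,\delta)$-code: $(n,M,\epsilon)$-code with $\theta<\delta$. Types: $P_{\boldsymbol u(i)}(x^{(\ell)})=\frac1n\#\{t:u_t(i)=x^{(\ell)}\}$, $P_{\mathscr C}=\frac1M\sum_iP_{\boldsymbol u(i)}$. For each $\ell$, $\mathcal E_\ell=\mathcal D_{i^\star,t^\star}$ where $(i^\star,t^\star)$ minimizes $\int_{\mathcal D_{i,t}}f_{Y|X}(y|x^{(\ell)})dy$ over $\{1,\dots,M\}\times\{1,\dots,n\}$. The code is homogeneous if $P_{\boldsymbol u(i)}=P_{\mathscr C}$ for every $i$, and $\mathcal D_{i,t}=\mathcal E_\ell$ whenever $u_t(i)=x^{(\ell)}$. *)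

theory Defs
  imports "HOL-Analysis.Analysis"
begin

text \<open>Conventions: codewords, positions and symbols are indexed from 0:
  codeword i < M, time t < n, symbol index l < L with symbols x l.
  Codeword i is the function u i :: nat \<Rightarrow> complex (u i t = u_t(i)),
  the decoding set of codeword i is the product of the sets D i t, t < n.\<close>

text \<open>Channel transition density f_{Y|X}(y|x), with s2 = sigma^2.\<close>
definition fYX :: "real \<Rightarrow> complex \<Rightarrow> complex \<Rightarrow> real" where
  "fYX s2 y x = exp (- (cmod (y - x))\<^sup>2 / s2) / (pi * s2)"

definition chan1 :: "real \<Rightarrow> complex \<Rightarrow> complex measure" where
  "chan1 s2 x = density lborel (\<lambda>y. ennreal (fYX s2 y x))"

definition noiseW :: "real \<Rightarrow> complex measure" where
  "noiseW s2 = chan1 s2 0"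

definition chanN :: "real \<Rightarrow> nat \<Rightarrow> (nat \<Rightarrow> complex) \<Rightarrow> (nat \<Rightarrow> complex) measure" where
  "chanN s2 n v = density (PiM {..<n} (\<lambda>_. lborel)) (\<lambda>y. ennreal (\<Prod>t<n. fYX s2 (y t) (v t)))"

definition wtype :: "nat \<Rightarrow> (nat \<Rightarrow> complex) \<Rightarrow> complex \<Rightarrow> real" where
  "wtype n v a = real (card {t. t < n \<and> v t = a}) / real n"

definition ctype :: "nat \<Rightarrow> nat \<Rightarrow> (nat \<Rightarrow> nat \<Rightarrow> complex) \<Rightarrow> complex \<Rightarrow> real" where
  "ctype n M u a = (\<Sum>i<M. wtype n (u i) a) / real M"

definition is_code :: "nat \<Rightarrow> nat \<Rightarrow> nat \<Rightarrow> (nat \<Rightarrow> complex) \<Rightarrow> real \<Rightarrow>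
    (nat \<Rightarrow> nat \<Rightarrow> complex) \<Rightarrow> (nat \<Rightarrow> nat \<Rightarrow> complex set) \<Rightarrow> bool" where
  "is_code n M L x A u D \<longleftrightarrow>
     (\<forall>i<M. \<forall>t<n. u i t \<in> x ` {..<L} \<and> cmod (u i t) \<le> A) \<and>
     (\<forall>i<M. \<forall>t<n. D i t \<in> sets lborel) \<and>
     (\<forall>i<M. \<forall>j<M. i \<noteq> j \<longrightarrow> PiE {..<n} (D i) \<inter> PiE {..<n} (D j) = {}) \<and>
     M \<le> 2 ^ (n * nat \<lfloor>log 2 (real L)\<rfloor>)"

definition err_i :: "real \<Rightarrow> nat \<Rightarrow> (nat \<Rightarrow> nat \<Rightarrow> complex) \<Rightarrow> (nat \<Rightarrow> nat \<Rightarrow> complex set) \<Rightarrow> nat \<Rightarrow> real" where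
  "err_i s2 n u D i = 1 - measure (chanN s2 n (u i)) (PiE {..<n} (D i))"

definition err :: "real \<Rightarrow> nat \<Rightarrow> nat \<Rightarrow> (nat \<Rightarrow> nat \<Rightarrow> complex) \<Rightarrow> (nat \<Rightarrow> nat \<Rightarrow> complex set) \<Rightarrow> real" where
  "err s2 n M u D = (\<Sum>i<M. err_i s2 n u D i) / real M"

definition theta_i :: "real \<Rightarrow> nat \<Rightarrow> (complex \<Rightarrow> ennreal) \<Rightarrow> real \<Rightarrow> (nat \<Rightarrow> nat \<Rightarrow> complex) \<Rightarrow> nat \<Rightarrow> real" where
  "theta_i s2 n g B u i = measure (chanN s2 n (u i))
     {z \<in> space (chanN s2 n (u i)). enn2ereal ((\<Sum>t<n. g (z t)) / of_nat n) < ereal B}"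

definition theta :: "real \<Rightarrow> nat \<Rightarrow> nat \<Rightarrow> (complex \<Rightarrow> ennreal) \<Rightarrow> real \<Rightarrow> (nat \<Rightarrow> nat \<Rightarrow> complex) \<Rightarrow> real" where
  "theta s2 n M g B u = (\<Sum>i<M. theta_i s2 n g B u i) / real M"

definition is_code_full :: "real \<Rightarrow> nat \<Rightarrow> nat \<Rightarrow> nat \<Rightarrow> (nat \<Rightarrow> complex) \<Rightarrow> real \<Rightarrow>
    (complex \<Rightarrow> ennreal) \<Rightarrow> real \<Rightarrow> real \<Rightarrow> real \<Rightarrow>
    (nat \<Rightarrow> nat \<Rightarrow> complex) \<Rightarrow> (nat \<Rightarrow> nat \<Rightarrow> complex set) \<Rightarrow> bool" where
  "is_code_full s2 n M L x A g eps B del u D \<longleftrightarrow>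
     is_code n M L x A u D \<and> err s2 n M u D < eps \<and> theta s2 n M g B u < del"

definition Eset :: "real \<Rightarrow> nat \<Rightarrow> nat \<Rightarrow> (nat \<Rightarrow> complex) \<Rightarrow> (nat \<Rightarrow> nat \<Rightarrow> complex set) \<Rightarrow> nat \<Rightarrow> complex set" where
  "Eset s2 n M x D l = (SOME E. \<exists>i<M. \<exists>t<n. E = D i t \<and>
      (\<forall>i'<M. \<forall>t'<n. measure (chan1 s2 (x l)) (D i t) \<le> measure (chan1 s2 (x l)) (D i' t')))"

definition homogeneous :: "real \<Rightarrow> nat \<Rightarrow> nat \<Rightarrow> nat \<Rightarrow> (nat \<Rightarrow> complex) \<Rightarrow>
    (nat \<Rightarrow> nat \<Rightarrow> complex) \<Rightarrow> (nat \<Rightarrow> nat \<Rightarrow> complex set) \<Rightarrow> bool" where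
  "homogeneous s2 n M L x u D \<longleftrightarrow>
     (\<forall>i<M. \<forall>l<L. wtype n (u i) (x l) = ctype n M u (x l)) \<and>
     (\<forall>i<M. \<forall>t<n. \<forall>l<L. u i t = x l \<longrightarrow> D i t = Eset s2 n M x D l)"

definition H2 :: "nat \<Rightarrow> (nat \<Rightarrow> real) \<Rightarrow> real" where
  "H2 L q = - (\<Sum>l<L. if q l = 0 then 0 else q l * log 2 (q l))"

definition Hln :: "nat \<Rightarrow> (nat \<Rightarrow> real) \<Rightarrow> real" where
  "Hln L q = - (\<Sum>l<L. if q l = 0 then 0 else q l * ln (q l))"

text \<open>Relative entropy (natural log), finite case: only meaningful when q' l > 0 whenever q l > 0.\<close>
definition Dln :: "nat \<Rightarrow> (nat \<Rightarrow> real) \<Rightarrow> (nat \<Rightarrow> real) \<Rightarrow> real" where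
  "Dln L q q' = (\<Sum>l<L. if q l = 0 then 0 else q l * ln (q l / q' l))"

end

theory Submission
  imports Defs "HOL-Probability.Probability" "HOL-Combinatorics.Multiset_Permutations"
begin

lemma ln_upper_aux:
  fixes x :: real assumes "0 \<le> x" "x < 1"
  shows "ln (1 + x) - ln (1 - x) \<le> 2*x + 2*x^3/(3*(1 - x^2))"
proof -
  define f where "f y = 2*y + (2/3)*(y^3/(1-y^2)) - ln (1 + y) + ln (1 - y)" for y :: real
  have d: "(f has_real_derivative (4/3)*y^4/(1-y^2)^2) (at y)" if "0 \<le> y" "y < 1" for y
  proof -
    have y2: "y^2 < 1" using that by (simp add: abs_square_less_1)
    define u where "u = 1 - y^2"
    have u: "u > 0" using y2 by (simp add: u_def)
    have p: "1 + y > 0" "1 - y > 0" using that by auto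
    have D1: "((\<lambda>y. y^3/(1-y^2)) has_real_derivative (3*y^2*u + 2*y^4)/u^2) (at y)"
    proof -
      have "((\<lambda>y. y^3/(1-y^2)) has_real_derivative ((3*y^2)*(1-y^2) - y^3*(-(2*y)))/((1-y^2)*(1-y^2))) (at y)"
        apply (rule DERIV_divide)
          apply (rule DERIV_cong[OF DERIV_pow[of 3 y]], simp)
         apply (rule DERIV_cong[OF DERIV_diff[OF DERIV_const DERIV_pow[of 2 y]]], simp)
        using u by (simp add: u_def)
      moreover have "((3*y^2)*(1-y^2) - y^3*(-(2*y)))/((1-y^2)*(1-y^2)) = (3*y^2*u + 2*y^4)/u^2"
        unfolding u_def[symmetric] by (simp add: power2_eq_square power3_eq_cube power4_eq_xxxx algebra_simps)
      ultimately show ?thesis by simp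
    qed
    have D2: "((\<lambda>y. ln (1+y)) has_real_derivative 1/(1+y)) (at y)"
    proof -
      have "((\<lambda>y. ln (1+y)) has_real_derivative (inverse (1+y)) * (0 + 1)) (at y)"
        by (rule DERIV_chain2[OF DERIV_ln DERIV_add[OF DERIV_const DERIV_ident]]) (use p in simp)
      then show ?thesis by (simp add: divide_inverse)
    qed
    have D3: "((\<lambda>y. ln (1-y)) has_real_derivative -(1/(1-y))) (at y)"
    proof -
      have "((\<lambda>y. ln (1-y)) has_real_derivative (inverse (1-y)) * (0 - 1)) (at y)"
        by (rule DERIV_chain2[OF DERIV_ln DERIV_diff[OF DERIV_const DERIV_ident]]) (use p in simp)
      then show ?thesis by (simp add: divide_inverse)
    qed
    have Df: "(f has_real_derivative 2 + (2/3)*((3*y^2*u + 2*y^4)/u^2) - 1/(1+y) + -(1/(1-y))) (at y)"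
      unfolding f_def[abs_def]
      by (intro DERIV_add DERIV_diff DERIV_cmult D1 D2 D3) (rule DERIV_cong[OF DERIV_cmult_Id[of 2]], simp)
    have "1/(1+y) + 1/(1-y) = 2/u"
      using p unfolding u_def by (simp add: field_simps power2_eq_square)
    then have e1: "2 + (2/3)*((3*y^2*u + 2*y^4)/u^2) - 1/(1+y) + -(1/(1-y)) = 2 + (2/3)*((3*y^2*u + 2*y^4)/u^2) - 2/u"
      by simp
    have e2: "2 + (2/3)*((3*y^2*u + 2*y^4)/u^2) - 2/u = (2*u^2 + (2/3)*(3*y^2*u + 2*y^4) - 2*u)/u^2"
      using u by (simp add: field_simps power2_eq_square)
    have e3: "2*u^2 + (2/3)*(3*y^2*u + 2*y^4) - 2*u = (4/3)*y^4"
      unfolding u_def by (simp add: power2_eq_square power4_eq_xxxx algebra_simps)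
    have eq: "2 + (2/3)*((3*y^2*u + 2*y^4)/u^2) - 1/(1+y) + -(1/(1-y)) = (4/3)*y^4/u^2"
      unfolding e1 e2 e3 by simp
    show ?thesis by (rule DERIV_cong[OF Df]) (use eq in \<open>simp add: u_def\<close>)
  qed
  have "f 0 \<le> f x"
  proof (rule DERIV_nonneg_imp_nondecreasing[of 0 x f])
    fix y assume y: "0 \<le> y" "y \<le> x"
    have "(4/3)*y^4/(1-y^2)^2 \<ge> 0" by simp
    then show "\<exists>z. (f has_real_derivative z) (at y) \<and> 0 \<le> z" using d[of y] y assms by force
  qed (use assms in simp)
  then show ?thesis by (simp add: f_def)
qed

lemma ln_lower_aux:
  fixes x :: real assumes "0 \<le> x" "x < 1"
  shows "2*x + 2*x^3/(3 - x^2) \<le> ln (1 + x) - ln (1 - x)"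
proof -
  define f where "f y = ln (1 + y) - ln (1 - y) - 2*y - 2*(y^3/(3 - y^2))" for y :: real
  have d: "(f has_real_derivative 8*y^4/((1-y^2)*(3-y^2)^2)) (at y)" if "0 \<le> y" "y < 1" for y
  proof -
    have y2: "y^2 < 1" using that by (simp add: abs_square_less_1)
    define u where "u = 1 - y^2"
    define w where "w = 3 - y^2"
    have u: "u > 0" "w > 0" using y2 by (simp_all add: u_def w_def)
    have p: "1 + y > 0" "1 - y > 0" using that by auto
    have D1: "((\<lambda>y. y^3/(3-y^2)) has_real_derivative (3*y^2*w + 2*y^4)/w^2) (at y)"
    proof -
      have "((\<lambda>y. y^3/(3-y^2)) has_real_derivative ((3*y^2)*(3-y^2) - y^3*(-(2*y)))/((3-y^2)*(3-y^2))) (at y)"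
        apply (rule DERIV_divide)
          apply (rule DERIV_cong[OF DERIV_pow[of 3 y]], simp)
         apply (rule DERIV_cong[OF DERIV_diff[OF DERIV_const DERIV_pow[of 2 y]]], simp)
        using u by (simp add: w_def)
      moreover have "((3*y^2)*(3-y^2) - y^3*(-(2*y)))/((3-y^2)*(3-y^2)) = (3*y^2*w + 2*y^4)/w^2"
        unfolding w_def[symmetric] by (simp add: power2_eq_square power3_eq_cube power4_eq_xxxx algebra_simps)
      ultimately show ?thesis by simp
    qed
    have D2: "((\<lambda>y. ln (1+y)) has_real_derivative 1/(1+y)) (at y)"
    proof -
      have "((\<lambda>y. ln (1+y)) has_real_derivative (inverse (1+y)) * (0 + 1)) (at y)"
        by (rule DERIV_chain2[OF DERIV_ln DERIV_add[OF DERIV_const DERIV_ident]]) (use p in simp)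
      then show ?thesis by (simp add: divide_inverse)
    qed
    have D3: "((\<lambda>y. ln (1-y)) has_real_derivative -(1/(1-y))) (at y)"
    proof -
      have "((\<lambda>y. ln (1-y)) has_real_derivative (inverse (1-y)) * (0 - 1)) (at y)"
        by (rule DERIV_chain2[OF DERIV_ln DERIV_diff[OF DERIV_const DERIV_ident]]) (use p in simp)
      then show ?thesis by (simp add: divide_inverse)
    qed
    have Df: "(f has_real_derivative 1/(1+y) - -(1/(1-y)) - 2 - 2*((3*y^2*w + 2*y^4)/w^2)) (at y)"
      unfolding f_def[abs_def]
      by (intro DERIV_add DERIV_diff DERIV_cmult D1 D2 D3) (rule DERIV_cong[OF DERIV_cmult_Id[of 2]], simp)
    have "1/(1+y) + 1/(1-y) = 2/u"
      using p unfolding u_def by (simp add: field_simps power2_eq_square)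
    then have e1: "1/(1+y) - -(1/(1-y)) - 2 - 2*((3*y^2*w + 2*y^4)/w^2) = 2/u - 2 - 2*((3*y^2*w + 2*y^4)/w^2)"
      by simp
    have e2: "2/u - 2 - 2*((3*y^2*w + 2*y^4)/w^2) = (2*w^2 - 2*u*w^2 - 2*u*(3*y^2*w + 2*y^4))/(u*w^2)"
      using u by (simp add: field_simps power2_eq_square)
    have e3: "2*w^2 - 2*u*w^2 - 2*u*(3*y^2*w + 2*y^4) = 8*y^4"
      unfolding u_def w_def by (simp add: power2_eq_square power4_eq_xxxx algebra_simps)
    have eq: "1/(1+y) - -(1/(1-y)) - 2 - 2*((3*y^2*w + 2*y^4)/w^2) = 8*y^4/(u*w^2)"
      unfolding e1 e2 e3 by simp
    show ?thesis by (rule DERIV_cong[OF Df]) (use eq in \<open>simp add: u_def w_def\<close>)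
  qed
  have "f 0 \<le> f x"
  proof (rule DERIV_nonneg_imp_nondecreasing[of 0 x f])
    fix y assume y: "0 \<le> y" "y \<le> x"
    have "y^2 < 1" using y assms by (simp add: abs_square_less_1)
    then have "8*y^4/((1-y^2)*(3-y^2)^2) \<ge> 0" by simp
    then show "\<exists>z. (f has_real_derivative z) (at y) \<and> 0 \<le> z" using d[of y] y assms by force
  qed (use assms in simp)
  then show ?thesis by (simp add: f_def)
qed

lemma ln_diff_eq:
  fixes n :: real assumes "n \<ge> 1"
  shows "ln (1 + 1/(2*n+1)) - ln (1 - 1/(2*n+1)) = ln (n+1) - ln n"
proof -
  have a: "1 + 1/(2*n+1) = (2*(n+1))/(2*n+1)" "1 - 1/(2*n+1) = (2*n)/(2*n+1)"
    using assms by (simp_all add: field_simps)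
  have "ln ((2*(n+1))/(2*n+1)) = ln (2*(n+1)) - ln (2*n+1)"
    using assms by (subst ln_div) auto
  also have "ln (2*(n+1)) = ln 2 + ln (n+1)" using assms by (intro ln_mult_pos) auto
  finally have 1: "ln ((2*(n+1))/(2*n+1)) = ln 2 + ln (n+1) - ln (2*n+1)" .
  have "ln ((2*n)/(2*n+1)) = ln (2*n) - ln (2*n+1)"
    using assms by (subst ln_div) auto
  also have "ln (2*n) = ln 2 + ln n" using assms by (intro ln_mult_pos) auto
  finally have 2: "ln ((2*n)/(2*n+1)) = ln 2 + ln n - ln (2*n+1)" .
  show ?thesis unfolding a 1 2 by simp
qed

lemma one_minus_inv: "(a::real) \<ge> 0 \<Longrightarrow> 1 - 1/(a+1) = a/(a+1)"
  by (simp add: field_simps)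

lemma x_ids:
  fixes n x :: real assumes "n \<ge> 1" and x: "x = 1/(2*n+1)"
  shows "(n + 1/2) * x = 1/2"
    and "x^2 / (1 - x^2) = 1/(4*n*(n+1))"
    and "x^2 / (3 - x^2) = 1/(12*n*(n+1)+2)"
proof -
  show "(n + 1/2) * x = 1/2" using assms by (simp add: field_simps)
  define m where "m = (2*n+1)^2"
  have m: "m = 4*n*(n+1) + 1" "m \<ge> 1" using assms unfolding m_def by (auto simp: power2_eq_square algebra_simps)
  have xm: "x^2 = 1/m" unfolding x m_def by (simp add: power_divide)
  show "x^2 / (1 - x^2) = 1/(4*n*(n+1))"
    unfolding xm using m by (simp add: field_simps)
  show "x^2 / (3 - x^2) = 1/(12*n*(n+1)+2)"
    unfolding xm using m by (simp add: field_simps)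
qed

lemma step_upper:
  fixes n :: real assumes "n \<ge> 1"
  shows "(n + 1/2) * (ln (n+1) - ln n) - 1 \<le> 1/(12*n) - 1/(12*(n+1))"
proof -
  define x where "x = 1/(2*n+1)"
  have x: "0 \<le> x" "x < 1" using assms by (auto simp: x_def)
  note ids = x_ids[OF assms x_def]
  have "(n + 1/2) * (ln (n+1) - ln n) \<le> (n + 1/2) * (2*x + 2*x^3/(3*(1 - x^2)))"
    using ln_upper_aux[OF x] ln_diff_eq[OF assms] assms unfolding x_def
    by (intro mult_left_mono) auto
  also have "2*x + 2*x^3/(3*(1 - x^2)) = 2*x * (1 + (x^2/(1-x^2))/3)"
    by (simp add: algebra_simps power3_eq_cube power2_eq_square)
  also have "(n + 1/2) * (2*x * (1 + (x^2/(1-x^2))/3)) = 2*((n + 1/2) * x) * (1 + (x^2/(1-x^2))/3)"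
    by simp
  also have "\<dots> = 1 + 1/(12*n*(n+1))"
    unfolding ids(1) ids(2) by simp
  also have "1/(12*n*(n+1)) = 1/(12*n) - 1/(12*(n+1))"
    using assms by (simp add: field_simps)
  finally show ?thesis by simp
qed

lemma step_lower:
  fixes n :: real assumes "n \<ge> 1"
  shows "1/(12*n+1) - 1/(12*(n+1)+1) \<le> (n + 1/2) * (ln (n+1) - ln n) - 1"
proof -
  define x where "x = 1/(2*n+1)"
  have x: "0 \<le> x" "x < 1" using assms by (auto simp: x_def)
  note ids = x_ids[OF assms x_def]
  have "2*x + 2*x^3/(3 - x^2) = 2*x * (1 + x^2/(3-x^2))"
    by (simp add: algebra_simps power3_eq_cube power2_eq_square)
  then have "(n + 1/2) * (2*x + 2*x^3/(3 - x^2)) = 2*((n + 1/2) * x) * (1 + x^2/(3-x^2))"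
    by simp
  also have "\<dots> = 1 + 1/(12*n*(n+1) + 2)"
    unfolding ids(1) ids(3) by simp
  finally have e: "(n + 1/2) * (2*x + 2*x^3/(3 - x^2)) = 1 + 1/(12*n*(n+1) + 2)" .
  have "1/(12*n+1) - 1/(12*(n+1)+1) = 12/((12*n+1)*(12*n+13))"
    using assms by (simp add: field_simps)
  also have "\<dots> \<le> 12/(12*(12*n*(n+1)+2))"
  proof (rule divide_left_mono)
    have "0 \<le> 12*n*(n+1)" using assms by simp
    then show "12*(12*n*(n+1)+2) \<le> (12*n+1)*(12*n+13)" using assms by (simp add: algebra_simps)
    have "0 \<le> 12*n*(n+1)" using assms by simp
    then have q: "0 < 12*n*(n+1)+2" by linarith
    show "0 < (12*n+1)*(12*n+13) * (12*(12*n*(n+1)+2))" by (intro mult_pos_pos) (use assms q in auto)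
  qed simp
  also have "12/(12*(12*n*(n+1)+2)) = 1/(12*n*(n+1)+2)"
    by (metis (no_types) mult.right_neutral mult_divide_mult_cancel_left zero_neq_numeral)
  finally have "1 + (1/(12*n+1) - 1/(12*(n+1)+1)) \<le> (n + 1/2) * (2*x + 2*x^3/(3 - x^2))"
    unfolding e by simp
  also have "\<dots> \<le> (n + 1/2) * (ln (n+1) - ln n)"
    using ln_lower_aux[OF x] ln_diff_eq[OF assms] assms unfolding x_def
    by (intro mult_left_mono) auto
  finally show ?thesis by simp
qed

definition dd :: "nat \<Rightarrow> real" where
  "dd n = ln (fact n) - (real n + 1/2) * ln (real n) + real n"

lemma dd_step:
  assumes "n \<ge> 1"
  shows "dd n - dd (Suc n) = (real n + 1/2) * (ln (real n + 1) - ln (real n)) - 1"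
proof -
  have "(fact (Suc n) :: real) = (1 + real n) * fact n" by (simp only: fact_Suc of_nat_Suc)
  then have "ln (fact (Suc n) :: real) = ln (1 + real n) + ln (fact n)"
    by (simp add: ln_mult_pos)
  then show ?thesis unfolding dd_def by (simp add: algebra_simps)
qed

definition seqA :: "nat \<Rightarrow> real" where "seqA k = dd (Suc k) - 1/(12 * real (Suc k))"
definition seqB :: "nat \<Rightarrow> real" where "seqB k = dd (Suc k) - 1/(12 * real (Suc k) + 1)"

lemma seqA_inc: "incseq seqA"
proof (rule incseq_SucI)
  fix k
  have "dd (Suc k) - dd (Suc (Suc k)) \<le> 1/(12 * real (Suc k)) - 1/(12 * (real (Suc k) + 1))"
    using dd_step[of "Suc k"] step_upper[of "real (Suc k)"] by simp
  then show "seqA k \<le> seqA (Suc k)" unfolding seqA_def by (simp add: algebra_simps)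
qed

lemma seqB_dec: "decseq seqB"
proof (rule decseq_SucI)
  fix k
  have "1/(12 * real (Suc k) + 1) - 1/(12 * (real (Suc k) + 1) + 1) \<le> dd (Suc k) - dd (Suc (Suc k))"
    using dd_step[of "Suc k"] step_lower[of "real (Suc k)"] by simp
  then show "seqB (Suc k) \<le> seqB k" unfolding seqB_def by (simp add: algebra_simps)
qed

lemma seqA_le_B: "seqA k \<le> seqB k"
  unfolding seqA_def seqB_def by (simp add: frac_le)

lemma dd_limit: "\<exists>C. dd \<longlonglongrightarrow> C \<and> (\<forall>k. seqA k \<le> C \<and> C \<le> seqB k)"
proof -
  have "\<forall>i. seqA i \<le> seqB 0"
    using order_trans[OF seqA_le_B decseqD[OF seqB_dec]] by blast
  from incseq_convergent[OF seqA_inc this] obtain C where C: "seqA \<longlonglongrightarrow> C" "\<forall>i. seqA i \<le> C"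
    by blast
  have r: "(\<lambda>k. 1/(12 * real (Suc k))) \<longlonglongrightarrow> 0"
    using tendsto_mult[OF tendsto_const[of "1/12"] LIMSEQ_inverse_real_of_nat]
    by (simp add: divide_simps)
  have r2: "(\<lambda>k. 1/(12 * real (Suc k) + 1)) \<longlonglongrightarrow> 0"
  proof (rule Lim_null_comparison[OF _ r])
    show "\<forall>\<^sub>F k in sequentially. norm (1/(12 * real (Suc k) + 1)) \<le> 1/(12 * real (Suc k))"
      by (auto intro!: always_eventually simp: frac_le)
  qed
  have "(\<lambda>k. seqA k + 1/(12 * real (Suc k))) \<longlonglongrightarrow> C + 0"
    by (intro tendsto_add C r)
  then have d1: "(\<lambda>k. dd (Suc k)) \<longlonglongrightarrow> C" unfolding seqA_def by simp
  have "(\<lambda>k. dd (Suc k) - 1/(12 * real (Suc k) + 1)) \<longlonglongrightarrow> C - 0"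
    by (intro tendsto_diff d1 r2)
  then have "seqB \<longlonglongrightarrow> C" unfolding seqB_def by simp
  then have "\<forall>k. C \<le> seqB k" using seqB_dec decseq_ge by blast
  with C d1 show ?thesis by (blast intro: LIMSEQ_imp_Suc)
qed

lemma wallis_eq:
  "(\<Prod>k=1..n. (4*real k^2)/(4*real k^2 - 1)) = (2^n * fact n)^4 / ((fact (2*n))^2 * (2*real n+1))"
proof (induction n)
  case 0 then show ?case by simp
next
  case (Suc n)
  define a :: real where "a = 2^n * fact n"
  define b :: real where "b = fact (2*n)"
  have a: "a > 0" and b: "b > 0" unfolding a_def b_def by auto
  have fa: "(2::real)^Suc n * fact (Suc n) = 2 * (real n + 1) * a" unfolding a_def by (simp add: algebra_simps)
  have fb: "(fact (2 * Suc n) :: real) = (2*real n+2)*(2*real n+1)*b"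
    unfolding b_def by (simp add: algebra_simps)
  have "(\<Prod>k=1..Suc n. (4*real k^2)/(4*real k^2 - 1)) =
        (4*real (Suc n)^2)/(4*real (Suc n)^2 - 1) * (\<Prod>k=1..n. (4*real k^2)/(4*real k^2 - 1))"
    by (rule prod.nat_ivl_Suc') simp
  also have "\<dots> = (4*real (Suc n)^2)/(4*real (Suc n)^2 - 1) * (a^4 / (b^2 * (2*real n+1)))"
    unfolding Suc.IH a_def b_def ..
  also have "\<dots> = (2 * (real n + 1) * a)^4 / (((2*real n+2)*(2*real n+1)*b)^2 * (2*real (Suc n)+1))"
  proof -
    have e: "4*real (Suc n)^2 - 1 = (2*real n+1)*(2*real n+3)"
      by (simp add: power2_eq_square algebra_simps)
    define m where "m = real n"
    have m: "m \<ge> 0" unfolding m_def by simp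
    have e2: "2*real (Suc n)+1 = 2*m+3" "real (Suc n) = m + 1" unfolding m_def by simp_all
    have nz: "(2*m+1)*(2*m+3) * (b^2 * (2*m+1)) \<noteq> 0" "((2*m+2)*(2*m+1)*b)^2 * (2*m+3) \<noteq> 0"
      using m b by auto
    have e3: "4*(m+1)^2 - 1 = (2*m+1)*(2*m+3)" "2*(m+1)+1 = 2*m+3"
      by (simp_all add: power2_eq_square algebra_simps)
    show ?thesis unfolding e2 m_def[symmetric] unfolding e3 times_divide_times_eq
      by (subst frac_eq_eq[OF nz]) (simp add: power2_eq_square power4_eq_xxxx algebra_simps)
  qed
  finally show ?case unfolding fa fb .
qed

lemma stirling_const: "dd \<longlonglongrightarrow> ln (sqrt (2*pi))"
proof -
  obtain C where C: "dd \<longlonglongrightarrow> C" using dd_limit by blast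
  define W where "W n = (\<Prod>k=1..n. (4*real k^2)/(4*real k^2 - 1))" for n
  have W: "W \<longlonglongrightarrow> pi/2" unfolding W_def by (rule wallis)
  have key: "4 * dd (Suc k) - 2 * dd (2 * Suc k) = ln (W (Suc k)) + ln 2 + ln (2 + 1/real (Suc k))" for k
  proof -
    define n where "n = Suc k"
    have n: "real n \<ge> 1" unfolding n_def by simp
    have p1: "(2::real)^n * fact n > 0" "(fact (2*n)::real) > 0" "2*real n+1 > 0" by auto
    have "ln (W n) = ln (((2::real)^n * fact n)^4) - ln ((fact (2*n))^2 * (2*real n+1))"
      unfolding W_def wallis_eq using p1 by (subst ln_div) auto
    also have "ln (((2::real)^n * fact n)^4) = 4 * (real n * ln 2 + ln (fact n))"
      using p1 by (simp add: ln_realpow ln_mult_pos)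
    also have "ln ((fact (2*n))^2 * (2*real n+1)) = 2 * ln (fact (2*n)) + ln (2*real n+1)"
      using p1 by (simp add: ln_realpow ln_mult_pos)
    finally have "ln (W n) = 4 * (real n * ln 2 + ln (fact n)) - 2 * ln (fact (2*n)) - ln (2*real n+1)"
      by simp
    moreover have "ln (fact n) = dd n + (real n + 1/2) * ln (real n) - real n" unfolding dd_def by simp
    moreover have "ln (fact (2*n)) = dd (2*n) + (2*real n + 1/2) * (ln 2 + ln (real n)) - 2 * real n"
      unfolding dd_def using n by (simp add: ln_mult)
    moreover have "ln (2 + 1/real n) = ln (2*real n+1) - ln (real n)"
    proof -
      have "2 + 1/real n = (2*real n+1)/real n" using n by (simp add: field_simps)
      then show ?thesis using n by (simp add: ln_div)
    qed
    ultimately show ?thesis unfolding n_def[symmetric] by (simp add: algebra_simps)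
  qed
  have sm: "strict_mono (\<lambda>k::nat. 2 * Suc k)" by (rule strict_monoI) simp
  have l1: "(\<lambda>k. 4 * dd (Suc k) - 2 * dd (2 * Suc k)) \<longlonglongrightarrow> 4*C - 2*C"
  proof (intro tendsto_diff tendsto_mult tendsto_const)
    show "(\<lambda>k. dd (Suc k)) \<longlonglongrightarrow> C" using C by (rule LIMSEQ_Suc)
    show "(\<lambda>k. dd (2 * Suc k)) \<longlonglongrightarrow> C" using LIMSEQ_subseq_LIMSEQ[OF C sm] by (simp add: comp_def)
  qed
  have l2: "(\<lambda>k. ln (W (Suc k)) + ln 2 + ln (2 + 1/real (Suc k))) \<longlonglongrightarrow> ln (pi/2) + ln 2 + ln (2 + 0)"
  proof (intro tendsto_add tendsto_ln tendsto_const)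
    show "(\<lambda>k. W (Suc k)) \<longlonglongrightarrow> pi/2" using W by (rule LIMSEQ_Suc)
    show "(\<lambda>k. 1/real (Suc k)) \<longlonglongrightarrow> 0" using LIMSEQ_inverse_real_of_nat by (simp add: divide_simps)
  qed auto
  have "4*C - 2*C = ln (pi/2) + ln 2 + ln (2 + 0)"
    using LIMSEQ_unique[OF l1] l2 unfolding key by blast
  then have "2*C = ln (2*pi)" by (simp add: ln_div ln_mult)
  then have "C = ln (sqrt (2*pi))" by (simp add: ln_sqrt)
  then show ?thesis using C by simp
qed

lemma fact_ln_bounds:
  assumes "n \<ge> 1"
  shows "ln (fact n) \<le> (real n + 1/2) * ln (real n) - real n + ln (sqrt (2*pi)) + 1/(12 * real n)"
    and "(real n + 1/2) * ln (real n) - real n + ln (sqrt (2*pi)) + 1/(12 * real n + 1) \<le> ln (fact n)"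
proof -
  obtain C where C: "dd \<longlonglongrightarrow> C" "\<forall>k. seqA k \<le> C \<and> C \<le> seqB k" using dd_limit by blast
  have CC: "C = ln (sqrt (2*pi))" using LIMSEQ_unique[OF C(1) stirling_const] .
  obtain k where k: "n = Suc k" using assms by (cases n) auto
  show "ln (fact n) \<le> (real n + 1/2) * ln (real n) - real n + ln (sqrt (2*pi)) + 1/(12 * real n)"
    using C(2)[rule_format, of k] unfolding CC seqA_def dd_def k[symmetric] by simp
  show "(real n + 1/2) * ln (real n) - real n + ln (sqrt (2*pi)) + 1/(12 * real n + 1) \<le> ln (fact n)"
    using C(2)[rule_format, of k] unfolding CC seqB_def dd_def k[symmetric] by simp
qed

lemma fYX_nonneg: "s2 > 0 \<Longrightarrow> fYX s2 y x \<ge> 0"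
  unfolding fYX_def by simp

lemma fYX_meas[measurable]: "(\<lambda>y. fYX s2 y x) \<in> borel_measurable borel"
  unfolding fYX_def by measurable

lemma fYX_normal:
  assumes "s2 > 0"
  shows "fYX s2 y x = normal_density (Re x) (sqrt (s2/2)) (Re y) * normal_density (Im x) (sqrt (s2/2)) (Im y)"
proof -
  have sq: "sqrt (2 * pi * (sqrt (s2/2))\<^sup>2) = sqrt (pi * s2)" using assms by simp
  have sq2: "2 * (sqrt (s2/2))\<^sup>2 = s2" using assms by simp
  have "sqrt (pi * s2) * sqrt (pi * s2) = pi * s2" using assms by simp
  then show ?thesis
    unfolding fYX_def normal_density_def sq sq2 using assms
    by (simp add: cmod_power2 exp_add[symmetric] add_divide_distrib diff_divide_distrib)
qed

lemma nn_integral_normal: "\<sigma> > 0 \<Longrightarrow> (\<integral>\<^sup>+ t. ennreal (normal_density \<mu> \<sigma> t) \<partial>lborel) = 1"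
  by (subst nn_integral_eq_integral) auto

lemma chan1_mass:
  assumes "s2 > 0"
  shows "(\<integral>\<^sup>+ y. ennreal (fYX s2 y x) \<partial>lborel) = 1"
proof -
  define f :: "complex \<Rightarrow> real \<Rightarrow> real" where "f b = (if b = 1 then normal_density (Re x) (sqrt (s2/2)) else normal_density (Im x) (sqrt (s2/2)))" for b
  have "(\<integral>\<^sup>+ y. ennreal (fYX s2 y x) \<partial>lborel) = (\<integral>\<^sup>+ y. (\<Prod>b\<in>Basis. ennreal (f b (y \<bullet> b))) \<partial>lborel)"
    unfolding f_def Basis_complex_def using assms by (simp add: fYX_normal mult.commute ennreal_mult')
  also have "\<dots> = (\<Prod>b\<in>Basis. (\<integral>\<^sup>+x. f b x \<partial>lborel))"
    by (rule nn_integral_lborel_prod) (auto simp: f_def)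
  also have "\<dots> = 1"
    unfolding Basis_complex_def f_def using assms by (simp add: nn_integral_normal)
  finally show ?thesis .
qed

lemma emeasure_chan1: "A \<in> sets lborel \<Longrightarrow> emeasure (chan1 s2 x) A = (\<integral>\<^sup>+ y. ennreal (fYX s2 y x) * indicator A y \<partial>lborel)"
  unfolding chan1_def by (rule emeasure_density) auto

lemma space_chan1[simp]: "space (chan1 s2 x) = UNIV" by (simp add: chan1_def)

lemma sets_chan1[simp, measurable_cong]: "sets (chan1 s2 x) = sets lborel" by (simp add: chan1_def)

lemma prob_chan1: "s2 > 0 \<Longrightarrow> prob_space (chan1 s2 x)"
  by (rule prob_spaceI) (simp add: emeasure_chan1 chan1_mass)

lemma chanN_box:
  assumes s2: "s2 > 0" and A: "\<And>t. t < n \<Longrightarrow> A t \<in> sets lborel"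
  shows "emeasure (chanN s2 n v) (PiE {..<n} A) = (\<Prod>t<n. emeasure (chan1 s2 (v t)) (A t))"
proof -
  interpret product_sigma_finite "\<lambda>_. lborel :: complex measure" by standard
  have mP: "(\<lambda>y. ennreal (\<Prod>t<n. fYX s2 (y t) (v t))) \<in> borel_measurable (PiM {..<n} (\<lambda>_. lborel))"
    by measurable
  have "emeasure (chanN s2 n v) (PiE {..<n} A) =
        (\<integral>\<^sup>+ y. ennreal (\<Prod>t<n. fYX s2 (y t) (v t)) * indicator (PiE {..<n} A) y \<partial>PiM {..<n} (\<lambda>_. lborel))"
    unfolding chanN_def using A by (intro emeasure_density mP sets_PiM_I_finite) auto
  also have "\<dots> = (\<integral>\<^sup>+ y. (\<Prod>t<n. ennreal (fYX s2 (y t) (v t)) * indicator (A t) (y t)) \<partial>PiM {..<n} (\<lambda>_. lborel))"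
  proof (rule nn_integral_cong)
    fix y assume y: "y \<in> space (PiM {..<n} (\<lambda>_. lborel :: complex measure))"
    have "indicator (PiE {..<n} A) y = (\<Prod>t<n. indicator (A t) (y t) :: ennreal)"
      using y by (auto simp: space_PiM indicator_def PiE_def Pi_def prod_zero_iff)
    then show "ennreal (\<Prod>t<n. fYX s2 (y t) (v t)) * indicator (PiE {..<n} A) y =
          (\<Prod>t<n. ennreal (fYX s2 (y t) (v t)) * indicator (A t) (y t))"
      using s2 by (simp add: prod.distrib prod_ennreal fYX_nonneg)
  qed
  also have "\<dots> = (\<Prod>t<n. (\<integral>\<^sup>+ y. ennreal (fYX s2 y (v t)) * indicator (A t) y \<partial>lborel))"
    using A by (intro product_nn_integral_prod) auto
  also have "\<dots> = (\<Prod>t<n. emeasure (chan1 s2 (v t)) (A t))"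
    using A by (intro prod.cong refl) (simp add: emeasure_chan1)
  finally show ?thesis .
qed

lemma space_chanN: "space (chanN s2 n v) = PiE {..<n} (\<lambda>_. UNIV)"
  unfolding chanN_def by (simp add: space_PiM)

lemma sets_chanN[simp, measurable_cong]: "sets (chanN s2 n v) = sets (PiM {..<n} (\<lambda>_. lborel))"
  unfolding chanN_def by simp

lemma prob_chanN:
  assumes "s2 > 0" shows "prob_space (chanN s2 n v)"
proof (rule prob_spaceI)
  have "emeasure (chanN s2 n v) (PiE {..<n} (\<lambda>_. UNIV)) = (\<Prod>t<n. emeasure (chan1 s2 (v t)) UNIV)"
    using assms by (intro chanN_box) auto
  also have "\<dots> = 1" using assms by (simp add: emeasure_chan1 chan1_mass)
  finally show "emeasure (chanN s2 n v) (space (chanN s2 n v)) = 1" unfolding space_chanN .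
qed

lemma chanN_integral_comp:
  assumes s2: "s2 > 0" and t: "t < n" and h[measurable]: "h \<in> borel_measurable borel"
  shows "(\<integral>\<^sup>+ z. h (z t) \<partial>chanN s2 n v) = (\<integral>\<^sup>+ y. ennreal (fYX s2 y (v t)) * h y \<partial>lborel)"
proof -
  interpret product_sigma_finite "\<lambda>_. lborel :: complex measure" by standard
  define F where "F s y = ennreal (fYX s2 y (v s)) * (if s = t then h y else 1)" for s y
  have "(\<integral>\<^sup>+ z. h (z t) \<partial>chanN s2 n v) =
        (\<integral>\<^sup>+ z. ennreal (\<Prod>s<n. fYX s2 (z s) (v s)) * h (z t) \<partial>PiM {..<n} (\<lambda>_. lborel))"
    unfolding chanN_def using t by (intro nn_integral_density) measurable
  also have "\<dots> = (\<integral>\<^sup>+ z. (\<Prod>s<n. F s (z s)) \<partial>PiM {..<n} (\<lambda>_. lborel))"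
  proof (rule nn_integral_cong)
    fix z
    have "(\<Prod>s<n. F s (z s)) = (\<Prod>s<n. ennreal (fYX s2 (z s) (v s))) * (\<Prod>s<n. (if s = t then h (z s) else 1))"
      unfolding F_def by (rule prod.distrib)
    also have "(\<Prod>s<n. (if s = t then h (z s) else 1)) = h (z t)"
      using t by (subst prod.delta) auto
    finally show "ennreal (\<Prod>s<n. fYX s2 (z s) (v s)) * h (z t) = (\<Prod>s<n. F s (z s))"
      using s2 by (simp add: prod_ennreal fYX_nonneg)
  qed
  also have "\<dots> = (\<Prod>s<n. (\<integral>\<^sup>+ y. F s y \<partial>lborel))"
    by (intro product_nn_integral_prod) (auto simp: F_def)
  also have "\<dots> = (\<Prod>s<n. (if s = t then (\<integral>\<^sup>+ y. ennreal (fYX s2 y (v t)) * h y \<partial>lborel) else 1))"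
    by (intro prod.cong refl) (auto simp: F_def chan1_mass s2)
  also have "\<dots> = (\<integral>\<^sup>+ y. ennreal (fYX s2 y (v t)) * h y \<partial>lborel)"
    using t by (subst prod.delta) auto
  finally show ?thesis .
qed

lemma noise_shift:
  assumes h[measurable]: "h \<in> borel_measurable borel"
  shows "(\<integral>\<^sup>+ w. h (x + w) \<partial>noiseW s2) = (\<integral>\<^sup>+ y. ennreal (fYX s2 y x) * h y \<partial>lborel)"
proof -
  have "(\<integral>\<^sup>+ w. h (x + w) \<partial>noiseW s2) = (\<integral>\<^sup>+ w. ennreal (fYX s2 w 0) * h (x + w) \<partial>lborel)"
    unfolding noiseW_def chan1_def by (intro nn_integral_density) measurable
  also have "\<dots> = (\<integral>\<^sup>+ w. ennreal (fYX s2 (x + w) x) * h (x + w) \<partial>lborel)"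
    by (simp add: fYX_def)
  also have "\<dots> = (\<integral>\<^sup>+ y. ennreal (fYX s2 y x) * h y \<partial>distr lborel borel ((+) x))"
    by (subst nn_integral_distr) auto
  also have "\<dots> = (\<integral>\<^sup>+ y. ennreal (fYX s2 y x) * h y \<partial>lborel)"
    by (simp add: lborel_distr_plus)
  finally show ?thesis .
qed

lemma multinom_bound:
  fixes n L :: nat and c :: "nat \<Rightarrow> nat" and M :: real and P :: "nat \<Rightarrow> real"
  assumes n: "n \<ge> 1" and L: "L \<ge> 1" and c: "\<And>l. l < L \<Longrightarrow> c l \<ge> 1" and cs: "(\<Sum>l<L. c l) = n"
    and M: "M \<ge> 1" and Mb: "M * (\<Prod>l<L. fact (c l)) \<le> fact n"
    and P: "\<And>l. l < L \<Longrightarrow> P l = real (c l) / real n"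
  shows "log 2 M / real n \<le> H2 L P
                + 1 / (real n)\<^sup>2 * (1/12 - (\<Sum>l<L. 1 / (12 * P l + 1)))
                + 1 / real n * (log 2 (sqrt (2 * pi)) - (\<Sum>l<L. log 2 (sqrt (2 * pi * P l))))
                - log 2 (real n) / real n * ((real L - 1) / 2)"
    (is "_ \<le> ?R")
proof -
  define K where "K = ln (sqrt (2*pi))"
  have n0: "real n > 0" using n by simp
  have cpos: "real (c l) > 0" if "l < L" for l using c[OF that] by simp
  have Ppos: "P l > 0" if "l < L" for l using P[OF that] cpos[OF that] n0 by simp
  have csr: "(\<Sum>l<L. real (c l)) = real n" using cs by (metis of_nat_sum)
  have ln2: "ln 2 > (0::real)" by simp
  have H: "real n * ln 2 * H2 L P = real n * ln (real n) - (\<Sum>l<L. real (c l) * ln (real (c l)))"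
  proof -
    have "real n * ln 2 * H2 L P = - (\<Sum>l<L. real n * ln 2 * (if P l = 0 then 0 else P l * log 2 (P l)))"
      unfolding H2_def by (simp add: sum_distrib_left)
    also have "\<dots> = - (\<Sum>l<L. real n * (P l * ln (P l)))"
      using Ppos by (intro arg_cong[where f=uminus] sum.cong refl) (simp add: log_def)
    also have "\<dots> = - (\<Sum>l<L. real (c l) * ln (real (c l)) - real (c l) * ln (real n))"
      using P cpos n0 by (intro arg_cong[where f=uminus] sum.cong refl) (simp add: ln_div algebra_simps)
    also have "\<dots> = real n * ln (real n) - (\<Sum>l<L. real (c l) * ln (real (c l)))"
      by (simp add: sum_subtractf sum_distrib_right[symmetric] csr)
    finally show ?thesis .
  qed
  have T1: "real n * ln 2 * (1 / (real n)\<^sup>2 * (1/12 - (\<Sum>l<L. 1 / (12 * P l + 1))))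
        = ln 2 / (12 * real n) - (\<Sum>l<L. ln 2 / (12 * real (c l) + real n))"
  proof -
    have "1 / (12 * P l + 1) = real n / (12 * real (c l) + real n)" if "l < L" for l
    proof -
      have "12 * P l + 1 = (12 * real (c l) + real n) / real n" unfolding P[OF that] using n0 by (simp add: field_simps)
      moreover have "12 * real (c l) + real n > 0" using n0 by simp
      ultimately show ?thesis by simp
    qed
    then have "(\<Sum>l<L. 1 / (12 * P l + 1)) = (\<Sum>l<L. real n / (12 * real (c l) + real n))" by simp
    moreover have "real n * ln 2 * (1 / (real n)\<^sup>2 * (real n / (12 * real (c l) + real n))) = ln 2 / (12 * real (c l) + real n)" for l
    proof -
      have gen: "a * b * (1 / a\<^sup>2 * (a / A)) = b / A" if "a > 0" for a b A :: real
        using that by (simp add: field_simps power2_eq_square)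
      show ?thesis using gen n0 by blast
    qed
    ultimately show ?thesis
      using n0 by (simp add: right_diff_distrib sum_distrib_left power2_eq_square)
  qed
  have T2: "real n * ln 2 * (1 / real n * (log 2 (sqrt (2 * pi)) - (\<Sum>l<L. log 2 (sqrt (2 * pi * P l)))))
        = K - (\<Sum>l<L. K + ln (real (c l)) / 2 - ln (real n) / 2)"
  proof -
    have "ln (sqrt (2 * pi * P l)) = K + ln (real (c l)) / 2 - ln (real n) / 2" if "l < L" for l
    proof -
      have "ln (sqrt (2 * pi * P l)) = ln (2*pi*P l) / 2" using Ppos[OF that] by (simp add: ln_sqrt)
      also have "ln (2*pi*P l) = ln (2*pi) + ln (real (c l)) - ln (real n)"
        using P[OF that] cpos[OF that] n0 by (simp add: ln_mult_pos ln_div)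
      finally show ?thesis unfolding K_def by (simp add: ln_sqrt)
    qed
    then have "(\<Sum>l<L. ln (sqrt (2 * pi * P l))) = (\<Sum>l<L. K + ln (real (c l)) / 2 - ln (real n) / 2)"
      by simp
    then show ?thesis
      unfolding log_def K_def[symmetric] using n0
      by (simp add: sum_divide_distrib[symmetric] field_simps)
  qed
  have T3: "real n * ln 2 * (log 2 (real n) / real n * ((real L - 1) / 2)) = ln (real n) * (real L - 1) / 2"
    unfolding log_def using n0 by simp
  have R: "real n * ln 2 * ?R = (real n + 1/2) * ln (real n) - (\<Sum>l<L. (real (c l) + 1/2) * ln (real (c l)))
          + (1 - real L) * K + ln 2 / (12 * real n) - (\<Sum>l<L. ln 2 / (12 * real (c l) + real n))"
  proof -
    have "real n * ln 2 * ?R = real n * ln 2 * H2 L P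
      + real n * ln 2 * (1 / (real n)\<^sup>2 * (1/12 - (\<Sum>l<L. 1 / (12 * P l + 1))))
      + real n * ln 2 * (1 / real n * (log 2 (sqrt (2 * pi)) - (\<Sum>l<L. log 2 (sqrt (2 * pi * P l)))))
      - real n * ln 2 * (log 2 (real n) / real n * ((real L - 1) / 2))"
      by (simp add: algebra_simps)
    also have "\<dots> = (real n * ln (real n) - (\<Sum>l<L. real (c l) * ln (real (c l))))
      + (ln 2 / (12 * real n) - (\<Sum>l<L. ln 2 / (12 * real (c l) + real n)))
      + (K - (\<Sum>l<L. K + ln (real (c l)) / 2 - ln (real n) / 2))
      - ln (real n) * (real L - 1) / 2"
      unfolding H T1 T2 T3 ..
    also have "\<dots> = (real n + 1/2) * ln (real n) - (\<Sum>l<L. (real (c l) + 1/2) * ln (real (c l)))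
          + (1 - real L) * K + ln 2 / (12 * real n) - (\<Sum>l<L. ln 2 / (12 * real (c l) + real n))"
      by (simp add: sum.distrib sum_subtractf sum_divide_distrib[symmetric] algebra_simps) (simp add: field_simps)
    finally show ?thesis .
  qed
  have fpos: "(\<Prod>l<L. fact (c l) :: real) > 0" by (intro prod_pos) auto
  have "ln M + (\<Sum>l<L. ln (fact (c l))) = ln (M * (\<Prod>l<L. fact (c l)))"
    using M fpos by (simp add: ln_mult_pos ln_prod)
  also have "\<dots> \<le> ln (fact n)" using Mb M fpos by simp
  finally have lnM: "ln M \<le> ln (fact n) - (\<Sum>l<L. ln (fact (c l)))" by simp
  have up: "ln (fact n) \<le> (real n + 1/2) * ln (real n) - real n + K + 1/(12 * real n)"
    using fact_ln_bounds(1)[OF n] unfolding K_def .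
  have lo: "(\<Sum>l<L. (real (c l) + 1/2) * ln (real (c l)) - real (c l) + K + 1/(12 * real (c l) + 1)) \<le> (\<Sum>l<L. ln (fact (c l)))"
    using fact_ln_bounds(2)[OF c] unfolding K_def by (intro sum_mono) auto
  have main: "ln M \<le> (real n + 1/2) * ln (real n) - (\<Sum>l<L. (real (c l) + 1/2) * ln (real (c l)))
          + (1 - real L) * K + 1/(12 * real n) - (\<Sum>l<L. 1/(12 * real (c l) + 1))"
  proof -
    have "(\<Sum>l<L. (real (c l) + 1/2) * ln (real (c l)) - real (c l) + K + 1/(12 * real (c l) + 1))
        = (\<Sum>l<L. (real (c l) + 1/2) * ln (real (c l))) - real n + real L * K + (\<Sum>l<L. 1/(12 * real (c l) + 1))"
      by (simp add: sum.distrib sum_subtractf csr)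
    then show ?thesis using lnM up lo by (simp add: algebra_simps)
  qed
  have key: "1/(12 * real n) - (\<Sum>l<L. 1/(12 * real (c l) + 1)) \<le> ln 2 / (12 * real n) - (\<Sum>l<L. ln 2 / (12 * real (c l) + real n))"
  if L2: "L \<ge> 2"
  proof -
    have c0: "c 0 \<le> n - 1"
    proof -
      have "c 0 + c 1 \<le> (\<Sum>l<L. c l)"
      proof -
        have "c 0 + c 1 = (\<Sum>l\<in>{0,1}. c l)" by simp
        also have "\<dots> \<le> (\<Sum>l<L. c l)" using L2 by (intro sum_mono2) auto
        finally show ?thesis .
      qed
      then show ?thesis using c[of 1] L2 cs by simp
    qed
    have l2: "ln 2 < (1::real)" by (rule ln_2_less_1)
    have trm: "(1 - ln 2) / (12 * real (c l) + 1) \<le> 1/(12 * real (c l) + 1) - ln 2 / (12 * real (c l) + real n)" for l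
    proof -
      have "ln 2 / (12 * real (c l) + real n) \<le> ln 2 / (12 * real (c l) + 1)"
        using n0 n by (intro divide_left_mono) auto
      then show ?thesis by (simp add: diff_divide_distrib)
    qed
    have t0: "(1 - ln 2) / (12 * real n) \<le> (1 - ln 2) / (12 * real (c 0) + 1)"
      using c0 l2 n by (intro divide_left_mono) auto
    have "(1 - ln 2) / (12 * real (c 0) + 1) \<le> (\<Sum>l<L. (1 - ln 2) / (12 * real (c l) + 1))"
      using L l2 by (intro member_le_sum) auto
    also have "\<dots> \<le> (\<Sum>l<L. 1/(12 * real (c l) + 1) - ln 2 / (12 * real (c l) + real n))"
      by (intro sum_mono trm)
    finally have "(1 - ln 2) / (12 * real n) \<le> (\<Sum>l<L. 1/(12 * real (c l) + 1) - ln 2 / (12 * real (c l) + real n))"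
      using t0 by linarith
    then show ?thesis by (simp add: sum_subtractf diff_divide_distrib)
  qed
  have "ln M \<le> real n * ln 2 * ?R"
  proof (cases "L = 1")
    case True
    then have c0: "c 0 = n" using cs by simp
    have "M * fact n \<le> fact n" using Mb True c0 by simp
    then have "M \<le> 1" by simp
    then have "ln M \<le> 0" using M by simp
    also have "0 \<le> ln 2 / (12 * real n) - ln 2 / (12 * real n + real n)"
      using n0 by (simp add: frac_le)
    also have "\<dots> = real n * ln 2 * ?R" unfolding R using True c0 by simp
    finally show ?thesis .
  next
    case False
    then show ?thesis unfolding R using main key L by linarith
  qed  then have "ln M / (real n * ln 2) \<le> ?R" using n0 ln2 by (simp add: divide_le_eq mult.commute)
  then show ?thesis unfolding log_def by (simp add: mult.commute)
qed

lemma partition_by_symbol: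
  fixes u x :: "nat \<Rightarrow> complex"
  assumes inj: "inj_on x {..<L}" and U: "\<And>t. t < n \<Longrightarrow> u t \<in> x ` {..<L}"
  shows "{..<n} = (\<Union>l\<in>{..<L}. {t. t < n \<and> u t = x l})"
    and "\<And>l l'. l \<in> {..<L} \<Longrightarrow> l' \<in> {..<L} \<Longrightarrow> l \<noteq> l' \<Longrightarrow> {t. t < n \<and> u t = x l} \<inter> {t. t < n \<and> u t = x l'} = {}"
proof -
  show "{..<n} = (\<Union>l\<in>{..<L}. {t. t < n \<and> u t = x l})" using U by auto
  fix l l' assume "l \<in> {..<L}" "l' \<in> {..<L}" "l \<noteq> l'"
  then have "x l \<noteq> x l'" using inj by (auto dest: inj_onD)
  then show "{t. t < n \<and> u t = x l} \<inter> {t. t < n \<and> u t = x l'} = {}" by auto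
qed

lemma prod_by_symbol:
  fixes u x :: "nat \<Rightarrow> complex" and \<phi> :: "complex \<Rightarrow> 'a::comm_monoid_mult"
  assumes inj: "inj_on x {..<L}" and U: "\<And>t. t < n \<Longrightarrow> u t \<in> x ` {..<L}"
  shows "(\<Prod>t<n. \<phi> (u t)) = (\<Prod>l<L. \<phi> (x l) ^ card {t. t < n \<and> u t = x l})"
proof -
  note pt = partition_by_symbol[OF inj U]
  have "(\<Prod>t<n. \<phi> (u t)) = prod (\<lambda>t. \<phi> (u t)) (\<Union>l\<in>{..<L}. {t. t < n \<and> u t = x l})"
    using pt(1) by (rule arg_cong)
  also have "\<dots> = (\<Prod>l<L. (\<Prod>t\<in>{t. t < n \<and> u t = x l}. \<phi> (u t)))"
    by (rule prod.UNION_disjoint) (use pt(2) in auto)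
  also have "\<dots> = (\<Prod>l<L. \<phi> (x l) ^ card {t. t < n \<and> u t = x l})"
  proof (intro prod.cong refl)
    fix l
    have "(\<Prod>t\<in>{t. t < n \<and> u t = x l}. \<phi> (u t)) = (\<Prod>t\<in>{t. t < n \<and> u t = x l}. \<phi> (x l))"
      by (rule prod.cong) auto
    then show "(\<Prod>t\<in>{t. t < n \<and> u t = x l}. \<phi> (u t)) = \<phi> (x l) ^ card {t. t < n \<and> u t = x l}"
      by simp
  qed
  finally show ?thesis .
qed

lemma sum_by_symbol:
  fixes u x :: "nat \<Rightarrow> complex" and \<phi> :: "complex \<Rightarrow> 'a::comm_semiring_1"
  assumes inj: "inj_on x {..<L}" and U: "\<And>t. t < n \<Longrightarrow> u t \<in> x ` {..<L}"
  shows "(\<Sum>t<n. \<phi> (u t)) = (\<Sum>l<L. of_nat (card {t. t < n \<and> u t = x l}) * \<phi> (x l))"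
proof -
  note pt = partition_by_symbol[OF inj U]
  have "(\<Sum>t<n. \<phi> (u t)) = sum (\<lambda>t. \<phi> (u t)) (\<Union>l\<in>{..<L}. {t. t < n \<and> u t = x l})"
    using pt(1) by (rule arg_cong)
  also have "\<dots> = (\<Sum>l<L. (\<Sum>t\<in>{t. t < n \<and> u t = x l}. \<phi> (u t)))"
    by (rule sum.UNION_disjoint) (use pt(2) in auto)
  also have "\<dots> = (\<Sum>l<L. of_nat (card {t. t < n \<and> u t = x l}) * \<phi> (x l))"
  proof (intro sum.cong refl)
    fix l
    have "(\<Sum>t\<in>{t. t < n \<and> u t = x l}. \<phi> (u t)) = (\<Sum>t\<in>{t. t < n \<and> u t = x l}. \<phi> (x l))"
      by (rule sum.cong) auto
    then show "(\<Sum>t\<in>{t. t < n \<and> u t = x l}. \<phi> (u t)) = of_nat (card {t. t < n \<and> u t = x l}) * \<phi> (x l)"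
      by simp
  qed
  finally show ?thesis .
qed

lemma card_by_symbol:
  fixes u x :: "nat \<Rightarrow> complex"
  assumes inj: "inj_on x {..<L}" and U: "\<And>t. t < n \<Longrightarrow> u t \<in> x ` {..<L}"
  shows "(\<Sum>l<L. card {t. t < n \<and> u t = x l}) = n"
  using sum_by_symbol[OF inj U, where \<phi>="\<lambda>_. 1::nat"] by simp

lemma exists_min_pair:
  fixes \<phi> :: "nat \<Rightarrow> nat \<Rightarrow> real"
  assumes "M \<ge> 1" "n \<ge> 1"
  shows "\<exists>i<M. \<exists>t<n. \<forall>i'<M. \<forall>t'<n. \<phi> i t \<le> \<phi> i' t'"
proof -
  define S where "S = {..<M} \<times> {..<n}"
  define f where "f = (\<lambda>(i,t). \<phi> i t)"
  have fin: "finite (f ` S)" unfolding S_def by simp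
  have "(0, 0) \<in> S" using assms unfolding S_def by auto
  then have ne: "f ` S \<noteq> {}" by auto
  have "Min (f ` S) \<in> f ` S" by (rule Min_in[OF fin ne])
  then obtain p where p: "p \<in> S" "f p = Min (f ` S)" by auto
  have "\<forall>q\<in>S. f p \<le> f q" using p fin by auto
  then show ?thesis using p(1) unfolding S_def f_def by (cases p) force
qed

lemma count_mset_map_upt: "count (mset (map f [0..<n])) a = card {t. t < n \<and> f t = a}"
proof -
  have "count (mset (map f [0..<n])) a = length (filter ((=) a) (map f [0..<n]))"
    by (simp only: count_mset count_list_eq_length_filter)
  also have "\<dots> = card {i. i < n \<and> a = map f [0..<n] ! i}" by (simp add: length_filter_conv_card)
  also have "{i. i < n \<and> a = map f [0..<n] ! i} = {i. i < n \<and> a = f i}" by auto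
  also have "{i. i < n \<and> a = f i} = {t. t < n \<and> f t = a}" by auto
  finally show ?thesis .
qed

theorem theorem1:
  fixes n M L :: nat and x :: "nat \<Rightarrow> complex" and A s2 eps B del :: real
    and g :: "complex \<Rightarrow> ennreal"
    and u :: "nat \<Rightarrow> nat \<Rightarrow> complex" and D :: "nat \<Rightarrow> nat \<Rightarrow> complex set"
  assumes "n \<ge> 1" and "M \<ge> 1"
    and "inj_on x {..<L}"
    and "A > 0" and "s2 > 0"
    and "g \<in> borel_measurable borel"
    and "eps > 0" and "del < 1"
    and "is_code_full s2 n M L x A g eps B del u D"
    and "homogeneous s2 n M L x u D"
    and "(\<Sum>j<L. measure (chan1 s2 (x j)) (Eset s2 n M x D j)) > 0"
  shows "let Pc = (\<lambda>l. ctype n M u (x l));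
             p = (\<lambda>l. measure (chan1 s2 (x l)) (Eset s2 n M x D l));
             Q = (\<lambda>l. p l / (\<Sum>j<L. p j))
         in ((\<forall>l<L. Pc l > 0) \<longrightarrow>
              log 2 (real M) / real n \<le> H2 L Pc
                + 1 / (real n)\<^sup>2 * (1/12 - (\<Sum>l<L. 1 / (12 * Pc l + 1)))
                + 1 / real n * (log 2 (sqrt (2 * pi)) - (\<Sum>l<L. log 2 (sqrt (2 * pi * Pc l))))
                - log 2 (real n) / real n * ((real L - 1) / 2))
          \<and> ereal B \<le> ereal (1 / (1 - del)) *
               (\<Sum>l<L. ereal (Pc l) * enn2ereal (\<integral>\<^sup>+ w. g (x l + w) \<partial>noiseW s2))
          \<and> eps \<ge> 1 - (if (\<exists>l<L. Pc l > 0 \<and> Q l = 0) then 0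
                       else exp (- real n * Hln L Pc - real n * Dln L Pc Q
                                 + real n * ln (\<Sum>j<L. p j)))"
proof -
  note gm[measurable] = assms(6)
  have code: "is_code n M L x A u D" and errlt: "err s2 n M u D < eps" and thlt: "theta s2 n M g B u < del"
    using assms(9) unfolding is_code_full_def by auto
  have U: "\<And>i t. i < M \<Longrightarrow> t < n \<Longrightarrow> u i t \<in> x ` {..<L}" using code unfolding is_code_def by auto
  have Dm: "\<And>i t. i < M \<Longrightarrow> t < n \<Longrightarrow> D i t \<in> sets lborel" using code unfolding is_code_def by auto
  have disj: "\<And>i j. i < M \<Longrightarrow> j < M \<Longrightarrow> i \<noteq> j \<Longrightarrow> PiE {..<n} (D i) \<inter> PiE {..<n} (D j) = {}"
    using code unfolding is_code_def by auto
  have hw: "\<And>i l. i < M \<Longrightarrow> l < L \<Longrightarrow> wtype n (u i) (x l) = ctype n M u (x l)"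
    using assms(10) unfolding homogeneous_def by auto
  have hD: "\<And>i t l. i < M \<Longrightarrow> t < n \<Longrightarrow> l < L \<Longrightarrow> u i t = x l \<Longrightarrow> D i t = Eset s2 n M x D l"
    using assms(10) unfolding homogeneous_def by auto
  have s2: "s2 > 0" and n1: "n \<ge> 1" and M1: "M \<ge> 1" and inj: "inj_on x {..<L}" using assms by auto
  define Pc where "Pc = (\<lambda>l. ctype n M u (x l))"
  define p where "p = (\<lambda>l. measure (chan1 s2 (x l)) (Eset s2 n M x D l))"
  define S where "S = (\<Sum>j<L. p j)"
  define Q where "Q = (\<lambda>l. p l / S)"
  have Spos: "S > 0" using assms(11) unfolding S_def p_def .
  define cnt where "cnt l = card {t. t < n \<and> u 0 t = x l}" for l
  have n0: "real n > 0" using n1 by simp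
  have M0: "(0::nat) < M" using M1 by simp
  have cnt_i: "card {t. t < n \<and> u i t = x l} = cnt l" if "i < M" "l < L" for i l
  proof -
    have "wtype n (u i) (x l) = wtype n (u 0) (x l)" using hw[OF that] hw[OF M0 that(2)] by simp
    then show ?thesis unfolding wtype_def cnt_def using n0 by simp
  qed
  have Pc_eq: "Pc l = real (cnt l) / real n" if "l < L" for l
    using hw[OF M0 that] unfolding Pc_def wtype_def cnt_def by simp
  have cnt_sum: "(\<Sum>l<L. cnt l) = n"
    unfolding cnt_def by (rule card_by_symbol[OF inj]) (rule U[OF M0])
  have Pc_nn: "Pc l \<ge> 0" if "l < L" for l using Pc_eq[OF that] by simp
  have Pc_sum: "(\<Sum>l<L. Pc l) = 1"
  proof -
    have "(\<Sum>l<L. Pc l) = (\<Sum>l<L. real (cnt l)) / real n" using Pc_eq by (simp add: sum_divide_distrib)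
    also have "\<dots> = 1" using cnt_sum n0 by (metis of_nat_sum divide_self_if less_irrefl)
    finally show ?thesis .
  qed
  have p_nn: "p l \<ge> 0" for l unfolding p_def by simp
  have pmin: "p l \<le> measure (chan1 s2 (x l)) (D i t)" if "i < M" "t < n" for l i t
  proof -
    let ?P = "\<lambda>E. \<exists>i<M. \<exists>t<n. E = D i t \<and> (\<forall>i'<M. \<forall>t'<n. measure (chan1 s2 (x l)) (D i t) \<le> measure (chan1 s2 (x l)) (D i' t'))"
    have "\<exists>E. ?P E" using exists_min_pair[OF M1 n1, of "\<lambda>i t. measure (chan1 s2 (x l)) (D i t)"] by blast
    then have "?P (Eset s2 n M x D l)" unfolding Eset_def by (rule someI_ex)
    then show ?thesis unfolding p_def using that by auto
  qed
  have meas_u: "measure (chan1 s2 (u i t)) (D i t) = p (inv_into {..<L} x (u i t))" if it: "i < M" "t < n" for i t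
  proof -
    obtain l where l: "l < L" "u i t = x l" using U[OF it] by auto
    have "inv_into {..<L} x (u i t) = l" using l inj by (simp add: inv_into_f_f)
    then show ?thesis using hD[OF it l] l unfolding p_def by simp
  qed
  define Pr where "Pr = (\<Prod>l<L. p l ^ cnt l)"
  have box: "measure (chanN s2 n (u i)) (PiE {..<n} (D i)) = Pr" if "i < M" for i
  proof -
    have "emeasure (chanN s2 n (u i)) (PiE {..<n} (D i)) = (\<Prod>t<n. emeasure (chan1 s2 (u i t)) (D i t))"
      by (rule chanN_box[OF s2]) (rule Dm[OF that])
    also have "\<dots> = ennreal (\<Prod>t<n. measure (chan1 s2 (u i t)) (D i t))"
      by (simp add: finite_measure.emeasure_eq_measure[OF prob_space.finite_measure[OF prob_chan1[OF s2]]] prod_ennreal)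
    finally have "measure (chanN s2 n (u i)) (PiE {..<n} (D i)) = (\<Prod>t<n. measure (chan1 s2 (u i t)) (D i t))"
      by (simp add: measure_def prod_nonneg)
    also have "\<dots> = (\<Prod>t<n. p (inv_into {..<L} x (u i t)))"
      using meas_u that by (intro prod.cong) auto
    also have "\<dots> = (\<Prod>l<L. p (inv_into {..<L} x (x l)) ^ card {t. t < n \<and> u i t = x l})"
      by (rule prod_by_symbol[OF inj]) (use U that in auto)
    also have "\<dots> = Pr"
      unfolding Pr_def using cnt_i that inj by (intro prod.cong refl) (simp add: inv_into_f_f)
    finally show ?thesis .
  qed
  have err_eq: "err s2 n M u D = 1 - Pr"
    unfolding err_def err_i_def using box M0 by simp
  have part3: "eps \<ge> 1 - (if (\<exists>l<L. Pc l > 0 \<and> Q l = 0) then 0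
                       else exp (- real n * Hln L Pc - real n * Dln L Pc Q + real n * ln S))"
  proof (cases "\<exists>l<L. Pc l > 0 \<and> Q l = 0")
    case True
    then obtain l where l: "l < L" "Pc l > 0" "Q l = 0" by auto
    then have pl: "p l = 0" using Spos unfolding Q_def by simp
    have "cnt l \<noteq> 0" using l(2) Pc_eq[OF l(1)] by (auto simp: zero_less_divide_iff)
    then have "Pr = 0" unfolding Pr_def using l(1) pl by (auto simp: prod_zero_iff)
    then show ?thesis using True errlt err_eq by simp
  next
    case False
    have ppos: "p l > 0" if "l < L" "Pc l \<noteq> 0" for l
    proof -
      have "Pc l > 0" using Pc_nn[OF that(1)] that(2) by simp
      then have "Q l \<noteq> 0" using False that(1) by auto
      then show ?thesis using p_nn[of l] unfolding Q_def by auto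
    qed
    have termeq: "real n * (if Pc l = 0 then 0 else Pc l * ln (Pc l)) - real n * (if Pc l = 0 then 0 else Pc l * ln (Pc l / Q l))
        + real n * (Pc l * ln S) = real (cnt l) * ln (p l)" if l: "l < L" for l
    proof (cases "Pc l = 0")
      case True
      then have "cnt l = 0" using Pc_eq[OF l] n0 by simp
      then show ?thesis using True by simp
    next
      case False
      have pc: "Pc l > 0" using Pc_nn[OF l] False by simp
      have pp: "p l > 0" using ppos[OF l False] .
      have lnq: "ln (Pc l / Q l) = ln (Pc l) - ln (p l) + ln S"
        unfolding Q_def using pc pp Spos by (simp add: ln_div ln_mult_pos)
      have "real n * (Pc l * ln (Pc l)) - real n * (Pc l * ln (Pc l / Q l)) + real n * (Pc l * ln S)
          = (real n * Pc l) * ln (p l)" unfolding lnq by (simp add: algebra_simps)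
      also have "real n * Pc l = real (cnt l)" using Pc_eq[OF l] n0 by simp
      finally show ?thesis using False by simp
    qed
    have "- real n * Hln L Pc - real n * Dln L Pc Q + real n * ln S
        = (\<Sum>l<L. real n * (if Pc l = 0 then 0 else Pc l * ln (Pc l)) - real n * (if Pc l = 0 then 0 else Pc l * ln (Pc l / Q l))
             + real n * (Pc l * ln S))"
    proof -
      have "real n * ln S = real n * ((\<Sum>l<L. Pc l) * ln S)" using Pc_sum by simp
      then show ?thesis unfolding Hln_def Dln_def
        by (simp add: sum.distrib sum_subtractf sum_distrib_left sum_distrib_right sum_negf)
    qed
    also have "\<dots> = (\<Sum>l<L. real (cnt l) * ln (p l))" using termeq by (intro sum.cong) auto
    finally have ex: "exp (- real n * Hln L Pc - real n * Dln L Pc Q + real n * ln S) = (\<Prod>l<L. exp (real (cnt l) * ln (p l)))"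
      by (simp add: exp_sum)
    also have "\<dots> = Pr" unfolding Pr_def
    proof (intro prod.cong refl)
      fix l assume "l \<in> {..<L}"
      then have l: "l < L" by simp
      show "exp (real (cnt l) * ln (p l)) = p l ^ cnt l"
      proof (cases "cnt l = 0")
        case True then show ?thesis by simp
      next
        case False
        then have "Pc l \<noteq> 0" using Pc_eq[OF l] n0 by simp
        then have "p l > 0" using ppos[OF l] by simp
        then show ?thesis by (simp add: exp_of_nat_mult)
      qed
    qed
    finally show ?thesis using False errlt err_eq by (simp only: if_False)
  qed
  have part2: "ereal B \<le> ereal (1 / (1 - del)) *
               (\<Sum>l<L. ereal (Pc l) * enn2ereal (\<integral>\<^sup>+ w. g (x l + w) \<partial>noiseW s2))"
  proof -
    define J where "J a = (\<integral>\<^sup>+ y. ennreal (fYX s2 y a) * g y \<partial>lborel)" for a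
    define SE where "SE = (\<Sum>l<L. ennreal (Pc l) * J (x l))"
    have SE_eq: "(\<Sum>l<L. ereal (Pc l) * enn2ereal (\<integral>\<^sup>+ w. g (x l + w) \<partial>noiseW s2)) = enn2ereal SE"
    proof -
      have "(\<Sum>l<L. ereal (Pc l) * enn2ereal (\<integral>\<^sup>+ w. g (x l + w) \<partial>noiseW s2)) = (\<Sum>l<L. enn2ereal (ennreal (Pc l) * J (x l)))"
        using Pc_nn by (intro sum.cong refl) (simp add: noise_shift[OF gm] J_def times_ennreal.rep_eq)
      also have "\<dots> = enn2ereal SE" unfolding SE_def by (rule sum_enn2ereal) simp
      finally show ?thesis .
    qed
    define G where "G z = (\<Sum>t<n. g (z t)) / of_nat n" for z :: "nat \<Rightarrow> complex"
    have Gm[measurable]: "G \<in> borel_measurable (PiM {..<n} (\<lambda>_. lborel :: complex measure))"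
      unfolding G_def by measurable
    have intG: "(\<integral>\<^sup>+ z. G z \<partial>chanN s2 n (u i)) = SE" if i: "i < M" for i
    proof -
      have inv: "inverse (of_nat n :: ennreal) = ennreal (1 / real n)"
        using n0 by (simp add: ennreal_of_nat_eq_real_of_nat inverse_ennreal inverse_eq_divide)
      have "(\<integral>\<^sup>+ z. G z \<partial>chanN s2 n (u i)) = (\<integral>\<^sup>+ z. (\<Sum>t<n. g (z t)) * ennreal (1 / real n) \<partial>chanN s2 n (u i))"
        unfolding G_def divide_ennreal_def inv ..
      also have "\<dots> = (\<integral>\<^sup>+ z. (\<Sum>t<n. g (z t)) \<partial>chanN s2 n (u i)) * ennreal (1 / real n)"
        by (rule nn_integral_multc) measurable
      also have "(\<integral>\<^sup>+ z. (\<Sum>t<n. g (z t)) \<partial>chanN s2 n (u i)) = (\<Sum>t<n. (\<integral>\<^sup>+ z. g (z t) \<partial>chanN s2 n (u i)))"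
        by (rule nn_integral_sum) measurable
      also have "\<dots> = (\<Sum>t<n. J (u i t))"
        unfolding J_def by (intro sum.cong refl chanN_integral_comp[OF s2]) auto
      also have "\<dots> = (\<Sum>l<L. of_nat (card {t. t < n \<and> u i t = x l}) * J (x l))"
        by (rule sum_by_symbol[OF inj]) (use U i in auto)
      also have "\<dots> = (\<Sum>l<L. of_nat (cnt l) * J (x l))"
        using cnt_i[OF i] by (intro sum.cong refl) auto
      also have "(\<Sum>l<L. of_nat (cnt l) * J (x l)) * ennreal (1 / real n) = SE"
        unfolding SE_def sum_distrib_right
      proof (intro sum.cong refl)
        fix l assume "l \<in> {..<L}"
        then have l: "l < L" by simp
        have "(of_nat (cnt l) :: ennreal) * ennreal (1 / real n) = ennreal (Pc l)"
          unfolding Pc_eq[OF l] ennreal_of_nat_eq_real_of_nat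
          by (simp add: ennreal_mult''[symmetric])
        then show "of_nat (cnt l) * J (x l) * ennreal (1 / real n) = ennreal (Pc l) * J (x l)"
          by (simp add: ac_simps)
      qed
      finally show ?thesis .
    qed
    have mk: "ennreal B * ennreal (1 - theta_i s2 n g B u i) \<le> SE" if i: "i < M" and B: "B > 0" for i
    proof -
      interpret P: prob_space "chanN s2 n (u i)" by (rule prob_chanN[OF s2])
      define Aset where "Aset = {z \<in> space (chanN s2 n (u i)). enn2ereal (G z) < ereal B}"
      have th: "theta_i s2 n g B u i = measure (chanN s2 n (u i)) Aset"
        unfolding theta_i_def Aset_def G_def ..
      have Am: "Aset \<in> sets (chanN s2 n (u i))" unfolding Aset_def by measurable
      have compl: "space (chanN s2 n (u i)) - Aset = {z \<in> space (chanN s2 n (u i)). ennreal B \<le> G z}"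
      proof -
        have "(\<not> enn2ereal (G z) < ereal B) \<longleftrightarrow> ennreal B \<le> G z" for z
        proof -
          have "(\<not> enn2ereal (G z) < ereal B) \<longleftrightarrow> enn2ereal (ennreal B) \<le> enn2ereal (G z)"
            using B by (simp add: not_less)
          also have "\<dots> \<longleftrightarrow> ennreal B \<le> G z" by (simp add: less_eq_ennreal.rep_eq)
          finally show ?thesis .
        qed
        then show ?thesis unfolding Aset_def by auto
      qed
      have "ennreal B * emeasure (chanN s2 n (u i)) {z \<in> space (chanN s2 n (u i)). ennreal B \<le> G z}
          = (\<integral>\<^sup>+ z. ennreal B * indicator {z \<in> space (chanN s2 n (u i)). ennreal B \<le> G z} z \<partial>chanN s2 n (u i))"
        by (rule nn_integral_cmult_indicator[symmetric]) measurable
      also have "\<dots> \<le> (\<integral>\<^sup>+ z. G z \<partial>chanN s2 n (u i))"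
        by (rule nn_integral_mono) (auto split: split_indicator)
      also have "\<dots> = SE" by (rule intG[OF i])
      finally have 1: "ennreal B * emeasure (chanN s2 n (u i)) (space (chanN s2 n (u i)) - Aset) \<le> SE"
        unfolding compl .
      have "emeasure (chanN s2 n (u i)) (space (chanN s2 n (u i)) - Aset) = ennreal (1 - theta_i s2 n g B u i)"
        unfolding th using Am by (simp add: P.emeasure_eq_measure P.prob_compl)
      then show ?thesis using 1 by simp
    qed
    show ?thesis
    proof (cases "B > 0")
      case False
      have "0 \<le> ereal (1 / (1 - del)) * enn2ereal SE" using assms(8) by simp
      then show ?thesis unfolding SE_eq using False by (simp add: order_trans[of _ 0])
    next
      case Bpos: True
      show ?thesis
      proof (cases "SE = top")
        case True
        then show ?thesis unfolding SE_eq using assms(8) by simp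
      next
        case False
        then obtain s where s: "SE = ennreal s" "s \<ge> 0" by (cases SE) auto
        have thle: "theta_i s2 n g B u i \<le> 1" for i
        proof -
          interpret P: prob_space "chanN s2 n (u i)" by (rule prob_chanN[OF s2])
          show ?thesis unfolding theta_i_def by simp
        qed
        have real_mk: "B * (1 - theta_i s2 n g B u i) \<le> s" if i: "i < M" for i
        proof -
          have "ennreal (B * (1 - theta_i s2 n g B u i)) \<le> ennreal s"
            using mk[OF i Bpos] thle[of i] Bpos s(1) by (simp add: ennreal_mult)
          then show ?thesis using s(2) by simp
        qed
        have "(\<Sum>i<M. B * (1 - theta_i s2 n g B u i)) \<le> (\<Sum>i<M. s)"
          by (intro sum_mono real_mk) simp
        then have "B * (real M - (\<Sum>i<M. theta_i s2 n g B u i)) \<le> real M * s"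
          by (simp add: sum_distrib_left[symmetric] sum_subtractf)
        then have "B * (1 - theta s2 n M g B u) \<le> s"
          using M0 unfolding theta_def by (simp add: field_simps)
        moreover have "B * (1 - del) \<le> B * (1 - theta s2 n M g B u)"
          using thlt Bpos by (intro mult_left_mono) auto
        ultimately have "B * (1 - del) \<le> s" by linarith
        then have "B \<le> s / (1 - del)" using assms(8) by (simp add: le_divide_eq)
        then show ?thesis unfolding SE_eq s(1) using s(2) assms(8) by simp
      qed
    qed
  qed
  have part1: "(\<forall>l<L. Pc l > 0) \<longrightarrow>
              log 2 (real M) / real n \<le> H2 L Pc
                + 1 / (real n)\<^sup>2 * (1/12 - (\<Sum>l<L. 1 / (12 * Pc l + 1)))
                + 1 / real n * (log 2 (sqrt (2 * pi)) - (\<Sum>l<L. log 2 (sqrt (2 * pi * Pc l))))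
                - log 2 (real n) / real n * ((real L - 1) / 2)"
  proof
    assume allpos: "\<forall>l<L. Pc l > 0"
    have cpos: "cnt l \<ge> 1" if "l < L" for l
      using allpos that Pc_eq[OF that] by (auto simp: zero_less_divide_iff)
    have L1: "L \<ge> 1" using U[OF M0, of 0] n1 by auto
    obtain l0 where l0: "l0 < L" "p l0 > 0"
    proof (rule ccontr)
      assume "\<not> thesis"
      then have "\<forall>l<L. p l \<le> 0" using that by force
      then have "S \<le> 0" unfolding S_def by (intro sum_nonpos) auto
      then show False using Spos by simp
    qed
    have Dne: "D i t \<noteq> {}" if "i < M" "t < n" for i t
    proof
      assume "D i t = {}"
      then have "measure (chan1 s2 (x l0)) (D i t) = 0" by simp
      then show False using pmin[OF that, of l0] l0(2) by simp
    qed
    have distinct: "\<exists>t<n. u i t \<noteq> u j t" if ij: "i < M" "j < M" "i \<noteq> j" for i j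
    proof (rule ccontr)
      assume "\<not> (\<exists>t<n. u i t \<noteq> u j t)"
      then have eq: "\<And>t. t < n \<Longrightarrow> u i t = u j t" by auto
      have "D i t = D j t" if t: "t < n" for t
      proof -
        obtain l where l: "l < L" "u i t = x l" using U[OF ij(1) t] by auto
        then show ?thesis using hD[OF ij(1) t l] hD[OF ij(2) t l(1)] eq[OF t] by simp
      qed
      then have "PiE {..<n} (D i) = PiE {..<n} (D j)" by (intro PiE_cong) auto
      moreover have "PiE {..<n} (D i) \<noteq> {}" using Dne[OF ij(1)] by (simp add: PiE_eq_empty_iff)
      ultimately show False using disj[OF ij] by simp
    qed
    define w where "w i = map (u i) [0..<n]" for i
    have inj_w: "inj_on w {..<M}"
    proof (rule inj_onI)
      fix i j assume i: "i \<in> {..<M}" and j: "j \<in> {..<M}" and e: "w i = w j"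
      have "u i t = u j t" if "t < n" for t
        using arg_cong[OF e, of "\<lambda>xs. xs ! t"] that unfolding w_def by simp
      then show "i = j" using distinct i j by auto
    qed
    define Am where "Am = mset (w 0)"
    have cnt_A: "count Am a = card {t. t < n \<and> u 0 t = a}" for a
      unfolding Am_def w_def by (rule count_mset_map_upt)
    have mset_w: "mset (w i) = Am" if i: "i < M" for i
    proof (rule multiset_eqI)
      fix a
      show "count (mset (w i)) a = count Am a"
      proof (cases "a \<in> x ` {..<L}")
        case True
        then obtain l where l: "l < L" "a = x l" by auto
        show ?thesis unfolding cnt_A w_def count_mset_map_upt l(2) cnt_i[OF i l(1)]
          using cnt_i[OF M0 l(1)] by simp
      next
        case False
        have e: "{t. t < n \<and> u i t = a} = {}" "{t. t < n \<and> u 0 t = a} = {}"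
          using U[OF i] U[OF M0] False by auto
        show ?thesis unfolding cnt_A w_def count_mset_map_upt e by simp
      qed
    qed
    have sizeA: "size Am = n" unfolding Am_def w_def by simp
    have setA: "set_mset Am = x ` {..<L}"
    proof
      show "set_mset Am \<subseteq> x ` {..<L}"
        unfolding Am_def w_def using U[OF M0] by auto
      show "x ` {..<L} \<subseteq> set_mset Am"
      proof
        fix a assume "a \<in> x ` {..<L}"
        then obtain l where l: "l < L" "a = x l" by auto
        have "count Am a = cnt l" unfolding cnt_A l(2) cnt_def ..
        then show "a \<in># Am" using cpos[OF l(1)] by (simp add: count_greater_zero_iff[symmetric])
      qed
    qed
    have "w ` {..<M} \<subseteq> permutations_of_multiset Am"
      using mset_w by (auto intro: permutations_of_multisetI)
    then have "card (w ` {..<M}) \<le> card (permutations_of_multiset Am)"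
      by (intro card_mono) auto
    then have Mle: "M \<le> card (permutations_of_multiset Am)" using card_image[OF inj_w] by simp
    have prodA: "(\<Prod>a\<in>set_mset Am. fact (count Am a)) = (\<Prod>l<L. fact (cnt l) :: nat)"
      unfolding setA by (subst prod.reindex[OF inj]) (simp add: cnt_A cnt_def)
    have "M * (\<Prod>l<L. fact (cnt l) :: nat) \<le> fact n"
      using mult_le_mono1[OF Mle, of "\<Prod>a\<in>set_mset Am. fact (count Am a)"]
        card_permutations_of_multiset_aux[of Am] unfolding prodA sizeA by simp
    then have Mb: "real M * (\<Prod>l<L. fact (cnt l) :: real) \<le> fact n"
      by (metis (mono_tags, lifting) of_nat_fact of_nat_le_iff of_nat_mult of_nat_prod prod.cong)
    show "log 2 (real M) / real n \<le> H2 L Pc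
                + 1 / (real n)\<^sup>2 * (1/12 - (\<Sum>l<L. 1 / (12 * Pc l + 1)))
                + 1 / real n * (log 2 (sqrt (2 * pi)) - (\<Sum>l<L. log 2 (sqrt (2 * pi * Pc l))))
                - log 2 (real n) / real n * ((real L - 1) / 2)"
      by (rule multinom_bound[OF n1 L1 cpos cnt_sum _ Mb Pc_eq]) (use M1 in auto)
  qed
  show ?thesis
    using part1[unfolded Pc_def] part2[unfolded Pc_def] part3[unfolded Pc_def Q_def S_def p_def]
    unfolding Let_def by blast
qed

end
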